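(* Let $m,n$ be positive integers. The multigraph $\mathcal{M}_{m,n}$ admits a generating knight's tour if and only if none of the following hold: (i) $m$ and $n$ are both even; (ii) $m\in\{1,2,4\}$; (iii) $m=3$ and $n\in\{1,2,4\}$; (iv) $m=5$ and $n=1$.
   Context: For a positive integer $m$, let $\mathcal{S}_m$ be the graph with vertex set $\{(a,b)\in\mathbb{Z}^2 : 0\le a<m\}$, where $(a,b)$ and $(a',b')$ are joined by an edge iff $\{|a-a'|,|b-b'|\}=\{1,2\}$. For a positive integer $n$, the map $\sigma(a,b)=(m-1-a,\,b+n)$ is a graph automorphism of $\mathcal{S}_m$ generating a free $\mathbb{Z}$-action; the knight's multigraph of the $m\times n$ Möbius strip board is the quotient $\mathcal{M}_{m,n}=\mathcal{S}_m/\langle\sigma\rangle$ (vertices and edges are orbits; multiple edges and loops may occur), and the quotient map $\phi_M:\mathcal{S}_m\to\mathcal{M}_{m,n}$ is a covering map. A knight's tour is a closed walk visiting every vertex exactly once apart from the repeated start/end vertex (a Hamiltonian cycle). Regard a tour as a closed walk starting and ending at the vertex $(0,0)$; it lifts uniquely to a walk in $\mathcal{S}_m$ starting at $(0,0)$. The tour is generating if this lift ends at $(m-1,n)$ or at $(m-1,-n)$ (equivalently, the corresponding closed curve represents a generator of the fundamental group $\cong\mathbb{Z}$ of the Möbius strip). *)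

theory Defs
  imports Main
begin

definition in_strip :: "nat \<Rightarrow> int \<times> int \<Rightarrow> bool" where
  "in_strip m p \<longleftrightarrow> 0 \<le> fst p \<and> fst p < int m"

definition knight_adj :: "int \<times> int \<Rightarrow> int \<times> int \<Rightarrow> bool" where
  "knight_adj p q \<longleftrightarrow> {\<bar>fst p - fst q\<bar>, \<bar>snd p - snd q\<bar>} = {1, 2}"

definition sigma :: "nat \<Rightarrow> nat \<Rightarrow> int \<times> int \<Rightarrow> int \<times> int" where
  "sigma m n p = (int m - 1 - fst p, snd p + int n)"

text \<open>Two points of S_m lie in the same orbit of the Z-action generated by sigma,
  i.e. they represent the same vertex of the Moebius knight's multigraph M_{m,n}.\<close>

definition same_orbit :: "nat \<Rightarrow> nat \<Rightarrow> int \<times> int \<Rightarrow> int \<times> int \<Rightarrow> bool" where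
  "same_orbit m n p q \<longleftrightarrow> (\<exists>k::nat. q = (sigma m n ^^ k) p \<or> p = (sigma m n ^^ k) q)"

text \<open>Lift of a knight's tour of M_{m,n} (Hamiltonian closed walk based at the vertex of (0,0)):
  by the covering property, closed walks of length N in M_{m,n} starting at the vertex
  of (0,0) correspond bijectively to knight walks p 0, ..., p N in S_m with p 0 = (0,0)
  whose endpoint p N lies in the orbit of (0,0).  The walk is a tour iff the vertices
  (orbits) of p 0, ..., p (N-1) are pairwise distinct and exhaust all vertices.\<close>

definition mobius_tour_lift :: "nat \<Rightarrow> nat \<Rightarrow> (nat \<Rightarrow> int \<times> int) \<Rightarrow> nat \<Rightarrow> bool" where
  "mobius_tour_lift m n p N \<longleftrightarrow>
     p 0 = (0, 0) \<and>
     (\<forall>i\<le>N. in_strip m (p i)) \<and>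
     (\<forall>i<N. knight_adj (p i) (p (Suc i))) \<and>
     same_orbit m n (p N) (p 0) \<and>
     (\<forall>i<N. \<forall>j<N. i \<noteq> j \<longrightarrow> \<not> same_orbit m n (p i) (p j)) \<and>
     (\<forall>q. in_strip m q \<longrightarrow> (\<exists>i<N. same_orbit m n (p i) q))"

definition generating_tour :: "nat \<Rightarrow> nat \<Rightarrow> (nat \<Rightarrow> int \<times> int) \<Rightarrow> nat \<Rightarrow> bool" where
  "generating_tour m n p N \<longleftrightarrow>
     mobius_tour_lift m n p N \<and> (p N = (int m - 1, int n) \<or> p N = (int m - 1, - int n))"

end

theory Submission
  imports Defs
begin

lemma knight_adj_iff: "knight_adj p q \<longleftrightarrow>
   (\<bar>fst p - fst q\<bar> = 1 \<and> \<bar>snd p - snd q\<bar> = 2) \<or> (\<bar>fst p - fst q\<bar> = 2 \<and> \<bar>snd p - snd q\<bar> = 1)"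
  unfolding knight_adj_def by (auto simp: doubleton_eq_iff)

lemma knight_adj_sym: "knight_adj p q \<longleftrightarrow> knight_adj q p"
  unfolding knight_adj_iff by (simp add: abs_minus_commute)

fun kchain :: "(int\<times>int) list \<Rightarrow> bool" where
  "kchain (x#y#xs) = (knight_adj x y \<and> kchain (y#xs))"
| "kchain _ = True"

lemma kchain_Cons: "kchain (x#xs) \<longleftrightarrow> kchain xs \<and> (xs \<noteq> [] \<longrightarrow> knight_adj x (hd xs))"
  by (cases xs) auto

lemma kchain_append: "kchain (xs @ ys) \<longleftrightarrow> kchain xs \<and> kchain ys \<and> (xs \<noteq> [] \<and> ys \<noteq> [] \<longrightarrow> knight_adj (last xs) (hd ys))"
  by (induction xs) (auto simp: kchain_Cons)

lemma kchain_map: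
  assumes "\<And>x y. knight_adj (g x) (g y) = knight_adj x y"
  shows "kchain (map g xs) = kchain xs"
  by (induction xs) (auto simp: kchain_Cons assms hd_map)

lemma kchain_nth: "kchain L \<Longrightarrow> Suc i < length L \<Longrightarrow> knight_adj (L!i) (L!Suc i)"
proof (induction L arbitrary: i)
  case Nil then show ?case by simp
next
  case (Cons x xs)
  show ?case
  proof (cases i)
    case 0 then show ?thesis using Cons by (cases xs) (auto)
  next
    case (Suc j) then show ?thesis using Cons by (auto simp: kchain_Cons)
  qed
qed

definition HP :: "(int\<times>int) set \<Rightarrow> int\<times>int \<Rightarrow> int\<times>int \<Rightarrow> bool" where
  "HP S s e \<longleftrightarrow> (\<exists>L. L \<noteq> [] \<and> distinct L \<and> set L = S \<and> hd L = s \<and> last L = e \<and> kchain L)"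

lemma HP_join:
  assumes "HP S1 s e1" "HP S2 s2 e" "S1 \<inter> S2 = {}" "knight_adj e1 s2"
  shows "HP (S1 \<union> S2) s e"
proof -
  obtain L1 where L1: "L1 \<noteq> []" "distinct L1" "set L1 = S1" "hd L1 = s" "last L1 = e1" "kchain L1"
    using assms(1) unfolding HP_def by blast
  obtain L2 where L2: "L2 \<noteq> []" "distinct L2" "set L2 = S2" "hd L2 = s2" "last L2 = e" "kchain L2"
    using assms(2) unfolding HP_def by blast
  show ?thesis unfolding HP_def
    by (rule exI[of _ "L1 @ L2"]) (use L1 L2 assms(3,4) in \<open>auto simp: kchain_append\<close>)
qed

lemma HP_image:
  assumes "HP S s e" "inj g" "\<And>x y. knight_adj (g x) (g y) = knight_adj x y"
  shows "HP (g ` S) (g s) (g e)"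
proof -
  obtain L where L: "L \<noteq> []" "distinct L" "set L = S" "hd L = s" "last L = e" "kchain L"
    using assms(1) unfolding HP_def by blast
  show ?thesis unfolding HP_def
  proof (rule exI[of _ "map g L"])
  have "inj_on g (set L)" using assms(2) by (metis injD inj_onI)
  then show "map g L \<noteq> [] \<and> distinct (map g L) \<and> set (map g L) = g ` S \<and> hd (map g L) = g s \<and> last (map g L) = g e \<and> kchain (map g L)"
    using L assms(3) by (auto simp: kchain_map distinct_map hd_map last_map)
  qed
qed

lemma HP_cert:
  assumes "L \<noteq> []" "distinct L" "length L = card S" "finite S" "set L \<subseteq> S" "kchain L"
  shows "HP S (hd L) (last L)"
proof -
  have "set L = S"
    using card_subset_eq[OF assms(4,5)] assms(2,3) by (simp add: distinct_card)
  then show ?thesis unfolding HP_def using assms by blast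
qed

lemma HP_finite: "HP S s e \<Longrightarrow> finite S"
  unfolding HP_def by auto



section \<open>Orbits\<close>

definition sg :: "nat \<Rightarrow> nat \<Rightarrow> int \<Rightarrow> int\<times>int \<Rightarrow> int\<times>int" where
  "sg m n k p = (if even k then fst p else int m - 1 - fst p, snd p + k * int n)"

lemma sg_0[simp]: "sg m n 0 p = p"
  by (simp add: sg_def)

lemma sg_sg: "sg m n k (sg m n j p) = sg m n (k + j) p"
  by (auto simp: sg_def algebra_simps)

lemma sigma_pow: "(sigma m n ^^ k) p = sg m n (int k) p"
proof (induction k arbitrary: p)
  case 0 then show ?case by simp
next
  case (Suc k)
  have s1: "sigma m n x = sg m n 1 x" for x by (simp add: sigma_def sg_def)
  have "(sigma m n ^^ Suc k) p = sigma m n ((sigma m n ^^ k) p)" by (simp only: funpow.simps comp_def)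
  also have "\<dots> = sg m n 1 (sg m n (int k) p)" by (simp only: s1 Suc.IH)
  also have "\<dots> = sg m n (int (Suc k)) p" by (simp add: sg_sg add.commute)
  finally show ?case .
qed

lemma same_orbit_sg: "same_orbit m n p q \<longleftrightarrow> (\<exists>k. q = sg m n k p)"
proof
  assume "same_orbit m n p q"
  then obtain k where "q = sg m n (int k) p \<or> p = sg m n (int k) q"
    unfolding same_orbit_def sigma_pow by blast
  then show "\<exists>k. q = sg m n k p"
  proof
    assume "p = sg m n (int k) q"
    then have "sg m n (- int k) p = q" by (simp add: sg_sg)
    then show ?thesis by metis
  qed blast
next
  assume "\<exists>k. q = sg m n k p"
  then obtain k where k: "q = sg m n k p" by blast
  show "same_orbit m n p q"
  proof (cases "k \<ge> 0")
    case True
    then have "q = (sigma m n ^^ nat k) p" using k by (simp add: sigma_pow)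
    then show ?thesis unfolding same_orbit_def by blast
  next
    case False
    have "sg m n (-k) q = p" using k by (simp add: sg_sg)
    then have "p = (sigma m n ^^ nat (-k)) q" using False by (simp add: sigma_pow)
    then show ?thesis unfolding same_orbit_def by blast
  qed
qed

definition canon :: "nat \<Rightarrow> nat \<Rightarrow> int\<times>int \<Rightarrow> int\<times>int" where
  "canon m n p = (if even (snd p div int n) then fst p else int m - 1 - fst p, snd p mod int n)"

lemma canon_eq_sg: "canon m n p = sg m n (- (snd p div int n)) p"
  by (simp add: canon_def sg_def minus_div_mult_eq_mod[symmetric] algebra_simps)

lemma canon_sg:
  assumes "0 < n"
  shows "canon m n (sg m n k p) = canon m n p"
proof -
  have d: "(snd p + k * int n) div int n = snd p div int n + k" using assms by simp
  have md: "(snd p + k * int n) mod int n = snd p mod int n" by simp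
  show ?thesis unfolding canon_def sg_def by (simp only: fst_conv snd_conv d md) auto
qed

lemma same_orbit_canon:
  assumes "0 < n"
  shows "same_orbit m n p q \<longleftrightarrow> canon m n p = canon m n q"
proof
  assume "same_orbit m n p q"
  then obtain k where "q = sg m n k p" using same_orbit_sg by blast
  then show "canon m n p = canon m n q" using canon_sg[OF assms] by simp
next
  assume h: "canon m n p = canon m n q"
  have "q = sg m n (snd q div int n) (sg m n (- (snd q div int n)) q)"
    by (simp add: sg_sg)
  also have "\<dots> = sg m n (snd q div int n) (canon m n q)"
    by (simp add: canon_eq_sg)
  also have "\<dots> = sg m n (snd q div int n) (sg m n (- (snd p div int n)) p)"
    using h by (simp add: canon_eq_sg)
  also have "\<dots> = sg m n (snd q div int n - snd p div int n) p"
    by (simp add: sg_sg)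
  finally show "same_orbit m n p q" unfolding same_orbit_sg by blast
qed

definition rect :: "nat \<Rightarrow> nat \<Rightarrow> (int\<times>int) set" where
  "rect m n = {0..<int m} \<times> {0..<int n}"

lemma card_rect: "card (rect m n) = m * n"
  by (simp add: rect_def card_cartesian_product)

lemma canon_in_rect:
  assumes "0 < n" "in_strip m p" shows "canon m n p \<in> rect m n"
  using assms by (auto simp: canon_def rect_def in_strip_def)

lemma canon_rect: "p \<in> rect m n \<Longrightarrow> canon m n p = p"
  by (cases p) (auto simp: canon_def rect_def)

definition FD :: "nat \<Rightarrow> nat \<Rightarrow> (int\<times>int) set \<Rightarrow> bool" where
  "FD m n D \<longleftrightarrow> finite D \<and> (\<forall>p\<in>D. in_strip m p) \<and> card D = m * n \<and>
     (\<forall>p\<in>D. \<forall>k. sg m n k p \<in> D \<longrightarrow> sg m n k p = p)"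

lemma FD_cover:
  assumes "0 < n" "FD m n D" "in_strip m q"
  shows "\<exists>d\<in>D. same_orbit m n d q"
proof -
  have inj: "inj_on (canon m n) D"
  proof
    fix x y assume xy: "x \<in> D" "y \<in> D" "canon m n x = canon m n y"
    then obtain k where "y = sg m n k x" using same_orbit_canon[OF assms(1)] same_orbit_sg by metis
    then show "x = y" using assms(2) xy unfolding FD_def by metis
  qed
  have sub: "canon m n ` D \<subseteq> rect m n" using assms canon_in_rect unfolding FD_def by blast
  have "card (canon m n ` D) = card (rect m n)"
    using inj assms(2) by (simp add: card_image card_rect FD_def)
  then have "canon m n ` D = rect m n"
    using card_subset_eq[OF _ sub] by (simp add: rect_def)
  moreover have "canon m n q \<in> rect m n" using canon_in_rect assms by blast
  ultimately obtain d where "d \<in> D" "canon m n d = canon m n q" by force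
  then show ?thesis using same_orbit_canon[OF assms(1)] by blast
qed

lemma tour_of_FD:
  assumes m: "0 < m" and n: "0 < n" and fd: "FD m n D" and hp: "HP D (0,0) e"
    and ea: "knight_adj e (int m - 1, int n)"
  shows "\<exists>p N. generating_tour m n p N"
proof -
  obtain L where L: "L \<noteq> []" "distinct L" "set L = D" "hd L = (0,0)" "last L = e" "kchain L"
    using hp unfolding HP_def by blast
  define N where "N = length L"
  define p where "p = (\<lambda>i. if i < N then L!i else (int m - 1, int n))"
  have N0: "0 < N" using L(1) N_def by simp
  have p0: "p 0 = (0,0)" using L(1,4) N0 by (simp add: p_def hd_conv_nth)
  have pN: "p N = (int m - 1, int n)" by (simp add: p_def)
  have inD: "i < N \<Longrightarrow> p i \<in> D" for i using L(3) nth_mem[of i L] by (simp add: p_def N_def)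
  have strip: "\<forall>i\<le>N. in_strip m (p i)"
  proof (intro allI impI)
    fix i assume "i \<le> N"
    show "in_strip m (p i)"
    proof (cases "i < N")
      case True then show ?thesis using inD fd unfolding FD_def by blast
    next
      case False then show ?thesis using m by (simp add: p_def in_strip_def)
    qed
  qed
  have adj: "\<forall>i<N. knight_adj (p i) (p (Suc i))"
  proof (intro allI impI)
    fix i assume i: "i < N"
    show "knight_adj (p i) (p (Suc i))"
    proof (cases "Suc i < N")
      case True then show ?thesis using kchain_nth[OF L(6)] by (simp add: p_def N_def)
    next
      case False
      then have "i = N - 1" "Suc i = N" using i by auto
      then have "p i = last L" using L(1) i by (simp add: p_def N_def last_conv_nth)
      then show ?thesis using ea L(5) \<open>Suc i = N\<close> by (simp add: pN)
    qed
  qed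
  have orb: "same_orbit m n (p N) (p 0)"
  proof -
    have "p N = (sigma m n ^^ 1) (p 0)" by (simp add: pN p0 sigma_def)
    then show ?thesis unfolding same_orbit_def by blast
  qed
  have dist: "\<forall>i<N. \<forall>j<N. i \<noteq> j \<longrightarrow> \<not> same_orbit m n (p i) (p j)"
  proof (intro allI impI notI)
    fix i j assume ij: "i < N" "j < N" "i \<noteq> j" and so: "same_orbit m n (p i) (p j)"
    obtain k where k: "p j = sg m n k (p i)" using so same_orbit_sg by blast
    have "p j = p i" using k inD[OF ij(1)] inD[OF ij(2)] fd unfolding FD_def by metis
    moreover have "p i = L!i" "p j = L!j" using ij by (auto simp: p_def)
    ultimately show False using L(2) ij by (simp add: N_def nth_eq_iff_index_eq)
  qed
  have cov: "\<forall>q. in_strip m q \<longrightarrow> (\<exists>i<N. same_orbit m n (p i) q)"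
  proof (intro allI impI)
    fix q assume "in_strip m q"
    then obtain d where d: "d \<in> D" "same_orbit m n d q" using FD_cover[OF n fd] by blast
    then obtain i where "i < N" "L!i = d" using L(3) by (auto simp: N_def in_set_conv_nth)
    then show "\<exists>i<N. same_orbit m n (p i) q" using d by (auto simp: p_def)
  qed
  have "generating_tour m n p N"
    unfolding generating_tour_def mobius_tour_lift_def
    using p0 strip adj orb dist cov pN by simp
  then show ?thesis by blast
qed

section \<open>The zigzag domain\<close>

definition Zs :: "int \<Rightarrow> int \<Rightarrow> int \<Rightarrow> int \<Rightarrow> (int\<times>int) set" where
  "Zs r h c w = {(a,b). r \<le> a \<and> a < r+h \<and> 2*(a mod 2) + c \<le> b \<and> b < 2*(a mod 2)+c+w}"

lemma mem_Zs: "(a,b) \<in> Zs r h c w \<longleftrightarrow> r \<le> a \<and> a < r+h \<and> 2*(a mod 2) + c \<le> b \<and> b < 2*(a mod 2)+c+w"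
  by (simp add: Zs_def)

lemma Zs_image: "Zs r h c w = (\<lambda>(a,j). (a, 2*(a mod 2)+c+j)) ` ({r..<r+h} \<times> {0..<w})"
proof (rule set_eqI)
  fix x :: "int\<times>int"
  obtain a b where x: "x = (a,b)" by fastforce
  show "x \<in> Zs r h c w \<longleftrightarrow> x \<in> (\<lambda>(a,j). (a, 2*(a mod 2)+c+j)) ` ({r..<r+h} \<times> {0..<w})"
  proof
    assume "x \<in> Zs r h c w"
    then have "(a, b - (2*(a mod 2)+c)) \<in> {r..<r+h} \<times> {0..<w}" using x by (auto simp: Zs_def)
    moreover have "x = (\<lambda>(a,j). (a, 2*(a mod 2)+c+j)) (a, b - (2*(a mod 2)+c))" using x by simp
    ultimately show "x \<in> (\<lambda>(a,j). (a, 2*(a mod 2)+c+j)) ` ({r..<r+h} \<times> {0..<w})" by blast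
  qed (auto simp: Zs_def x)
qed

lemma card_Zs: "card (Zs r h c w) = nat h * nat w"
proof -
  have "inj_on (\<lambda>(a,j). (a, 2*(a mod 2)+c+(j::int))) ({r..<r+h} \<times> {0..<w})"
    by (auto simp: inj_on_def)
  then show ?thesis unfolding Zs_image by (simp add: card_image card_cartesian_product)
qed

lemma finite_Zs: "finite (Zs r h c w)"
  unfolding Zs_image by simp

lemma Zs_stack: "0 \<le> h1 \<Longrightarrow> 0 \<le> h2 \<Longrightarrow> Zs r h1 c w \<union> Zs (r+h1) h2 c w = Zs r (h1+h2) c w"
  by (auto simp: Zs_def)

lemma Zs_stack_disj: "Zs r h1 c w \<inter> Zs (r+h1) h2 c w = {}"
  by (auto simp: Zs_def)

lemma Zs_cols: "0 \<le> w1 \<Longrightarrow> 0 \<le> w2 \<Longrightarrow> Zs r h c w1 \<union> Zs r h (c+w1) w2 = Zs r h c (w1+w2)"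
  by (auto simp: Zs_def)

lemma Zs_cols_disj: "Zs r h c w1 \<inter> Zs r h (c+w1) w2 = {}"
  by (auto simp: Zs_def)

definition tr :: "int\<times>int \<Rightarrow> int\<times>int \<Rightarrow> int\<times>int" where
  "tr v p = (fst p + fst v, snd p + snd v)"

definition fl :: "int \<Rightarrow> int\<times>int \<Rightarrow> int\<times>int" where
  "fl m p = (m - 1 - fst p, snd p)"

lemma inj_tr: "inj (tr v)" by (auto simp: inj_def tr_def prod_eq_iff)
lemma inj_fl: "inj (fl m)" by (auto simp: inj_def fl_def prod_eq_iff)
lemma adj_tr: "knight_adj (tr v x) (tr v y) = knight_adj x y" by (simp add: knight_adj_iff tr_def)
lemma adj_fl: "knight_adj (fl m x) (fl m y) = knight_adj x y" by (simp add: knight_adj_iff fl_def abs_minus_commute)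

lemma tr_Zs:
  assumes "even r'"
  shows "tr (r',c') ` Zs r h c w = Zs (r+r') h (c+c') w"
proof (rule set_eqI)
  fix x :: "int\<times>int"
  obtain a b where x: "x = (a,b)" by fastforce
  have md: "(a - r') mod 2 = a mod 2" "(a + r') mod 2 = a mod 2" for a
    using assms by (auto simp: mod_diff_eq[symmetric] mod_add_eq[symmetric] elim!: evenE)
  show "x \<in> tr (r',c') ` Zs r h c w \<longleftrightarrow> x \<in> Zs (r+r') h (c+c') w"
  proof
    assume "x \<in> tr (r',c') ` Zs r h c w"
    then show "x \<in> Zs (r+r') h (c+c') w" using md by (auto simp: Zs_def tr_def)
  next
    assume h: "x \<in> Zs (r+r') h (c+c') w"
    have "(a - r', b - c') \<in> Zs r h c w" using h md x by (auto simp: Zs_def)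
    moreover have "x = tr (r',c') (a - r', b - c')" by (simp add: x tr_def)
    ultimately show "x \<in> tr (r',c') ` Zs r h c w" by blast
  qed
qed

lemma fl_Zs:
  assumes "odd m"
  shows "fl m ` Zs 0 m c w = Zs 0 m c w"
proof -
  have md: "(m - 1 - a) mod 2 = a mod 2" for a using assms by presburger
  show ?thesis
  proof (rule set_eqI)
    fix x :: "int\<times>int"
    obtain a b where x: "x = (a,b)" by fastforce
    show "x \<in> fl m ` Zs 0 m c w \<longleftrightarrow> x \<in> Zs 0 m c w"
    proof
      assume "x \<in> fl m ` Zs 0 m c w"
      then show "x \<in> Zs 0 m c w" using md by (auto simp: Zs_def fl_def)
    next
      assume h: "x \<in> Zs 0 m c w"
      have "(m - 1 - a, b) \<in> Zs 0 m c w" using h md[of a] x by (auto simp: Zs_def)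
      moreover have "x = fl m (m - 1 - a, b)" by (simp add: x fl_def)
      ultimately show "x \<in> fl m ` Zs 0 m c w" by blast
    qed
  qed
qed

definition Ap :: "int \<Rightarrow> int \<Rightarrow> bool" where
  "Ap h w \<longleftrightarrow> (\<exists>e. knight_adj e (h, 0) \<and> HP (Zs 0 h 0 w) (0,0) e)"
definition Bp :: "int \<Rightarrow> int \<Rightarrow> bool" where
  "Bp m w \<longleftrightarrow> (\<exists>e. knight_adj e (m - 1, w) \<and> HP (Zs 0 m 0 w) (0,0) e)"
definition Tp :: "int \<Rightarrow> int \<Rightarrow> bool" where
  "Tp m w \<longleftrightarrow> (\<exists>e. knight_adj e (0, w) \<and> HP (Zs 0 m 0 w) (0,0) e)"

lemma stack_AB:
  assumes "even h" "0 \<le> h" "0 \<le> m" "Ap h w" "Bp m w"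
  shows "Bp (h+m) w"
proof -
  obtain e1 where e1: "knight_adj e1 (h,0)" "HP (Zs 0 h 0 w) (0,0) e1" using assms(4) Ap_def by blast
  obtain e2 where e2: "knight_adj e2 (m-1,w)" "HP (Zs 0 m 0 w) (0,0) e2" using assms(5) Bp_def by blast
  have "HP (tr (h,0) ` Zs 0 m 0 w) (tr (h,0) (0,0)) (tr (h,0) e2)"
    by (rule HP_image[OF e2(2) inj_tr adj_tr])
  then have h2: "HP (Zs h m 0 w) (h,0) (tr (h,0) e2)"
    using tr_Zs[OF assms(1), of 0 0 m 0 w] by (simp add: tr_def)
  have "HP (Zs 0 h 0 w \<union> Zs h m 0 w) (0,0) (tr (h,0) e2)"
    by (rule HP_join[OF e1(2) h2 _ e1(1)]) (use Zs_stack_disj[of 0 h 0 w m] in simp)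
  then have "HP (Zs 0 (h+m) 0 w) (0,0) (tr (h,0) e2)" using Zs_stack[OF assms(2,3), of 0 0 w] by simp
  moreover have "knight_adj (tr (h,0) e2) (h + m - 1, w)"
    using e2(1) adj_tr[of "(h,0)" e2 "(m-1,w)"] by (simp add: tr_def algebra_simps)
  ultimately show ?thesis unfolding Bp_def by blast
qed

lemma col_BB:
  assumes "odd m" "0 \<le> w1" "0 \<le> w2" "Bp m w1" "Bp m w2"
  shows "Tp m (w1+w2)"
proof -
  obtain e1 where e1: "knight_adj e1 (m-1,w1)" "HP (Zs 0 m 0 w1) (0,0) e1" using assms(4) Bp_def by blast
  obtain e2 where e2: "knight_adj e2 (m-1,w2)" "HP (Zs 0 m 0 w2) (0,0) e2" using assms(5) Bp_def by blast
  let ?g = "tr (0,w1) \<circ> fl m"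
  have ig: "inj ?g" using inj_tr inj_fl by (simp add: inj_compose)
  have ag: "knight_adj (?g x) (?g y) = knight_adj x y" for x y by (simp add: adj_tr adj_fl)
  have "HP (?g ` Zs 0 m 0 w2) (?g (0,0)) (?g e2)" by (rule HP_image[OF e2(2) ig ag])
  moreover have "?g ` Zs 0 m 0 w2 = tr (0,w1) ` (fl m ` Zs 0 m 0 w2)" by (simp add: image_comp)
  moreover have "\<dots> = Zs 0 m w1 w2"
    using fl_Zs[OF assms(1), of 0 w2] tr_Zs[of 0 w1 0 m 0 w2] by simp
  ultimately have h2: "HP (Zs 0 m w1 w2) (m-1, w1) (?g e2)" by (simp add: tr_def fl_def)
  have "HP (Zs 0 m 0 w1 \<union> Zs 0 m w1 w2) (0,0) (?g e2)"
    by (rule HP_join[OF e1(2) h2 _ e1(1)]) (use Zs_cols_disj[of 0 m 0 w1 w2] in simp)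
  then have "HP (Zs 0 m 0 (w1+w2)) (0,0) (?g e2)" using Zs_cols[OF assms(2,3), of 0 m 0] by simp
  moreover have "knight_adj (?g e2) (0, w1+w2)"
  proof -
    have "knight_adj (?g e2) (?g (m-1,w2))" using e2(1) ag by blast
    then show ?thesis by (simp add: tr_def fl_def add.commute)
  qed
  ultimately show ?thesis unfolding Tp_def by blast
qed

lemma col_TB:
  assumes "0 \<le> w1" "0 \<le> w2" "Tp m w1" "Bp m w2"
  shows "Bp m (w1+w2)"
proof -
  obtain e1 where e1: "knight_adj e1 (0,w1)" "HP (Zs 0 m 0 w1) (0,0) e1" using assms(3) Tp_def by blast
  obtain e2 where e2: "knight_adj e2 (m-1,w2)" "HP (Zs 0 m 0 w2) (0,0) e2" using assms(4) Bp_def by blast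
  have "HP (tr (0,w1) ` Zs 0 m 0 w2) (tr (0,w1) (0,0)) (tr (0,w1) e2)"
    by (rule HP_image[OF e2(2) inj_tr adj_tr])
  then have h2: "HP (Zs 0 m w1 w2) (0,w1) (tr (0,w1) e2)"
    using tr_Zs[of 0 w1 0 m 0 w2] by (simp add: tr_def)
  have "HP (Zs 0 m 0 w1 \<union> Zs 0 m w1 w2) (0,0) (tr (0,w1) e2)"
    by (rule HP_join[OF e1(2) h2 _ e1(1)]) (use Zs_cols_disj[of 0 m 0 w1 w2] in simp)
  then have "HP (Zs 0 m 0 (w1+w2)) (0,0) (tr (0,w1) e2)" using Zs_cols[OF assms(1,2), of 0 m 0] by simp
  moreover have "knight_adj (tr (0,w1) e2) (m - 1, w1+w2)"
    using e2(1) adj_tr[of "(0,w1)" e2 "(m-1,w2)"] by (simp add: tr_def algebra_simps)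
  ultimately show ?thesis unfolding Bp_def by blast
qed

lemma col_BBB:
  assumes "odd m" "0 \<le> w1" "0 \<le> w2" "0 \<le> w3" "Bp m w1" "Bp m w2" "Bp m w3"
  shows "Bp m (w1+w2+w3)"
  using col_TB[OF _ assms(4) col_BB[OF assms(1,2,3,5,6)] assms(7)] assms(2,3) by simp

lemma FD_Zs:
  assumes "odd m" "0 < m" "0 < n"
  shows "FD m n (Zs 0 (int m) 0 (int n))"
  unfolding FD_def
proof (intro conjI ballI allI impI)
  show "finite (Zs 0 (int m) 0 (int n))" by (rule finite_Zs)
  show "card (Zs 0 (int m) 0 (int n)) = m * n" by (simp add: card_Zs nat_mult_distrib)
next
  fix p assume "p \<in> Zs 0 (int m) 0 (int n)"
  then show "in_strip m p" by (auto simp: Zs_def in_strip_def)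
next
  fix p k assume p: "p \<in> Zs 0 (int m) 0 (int n)" and q: "sg m n k p \<in> Zs 0 (int m) 0 (int n)"
  obtain a b where ab: "p = (a,b)" by fastforce
  have om: "odd (int m)" using assms(1) by simp
  have md: "(int m - 1 - a) mod 2 = a mod 2" using om by presburger
  have "fst (sg m n k p) mod 2 = a mod 2" using md by (simp add: sg_def ab)
  then have "b + k * int n < 2*(a mod 2) + int n" "2*(a mod 2) \<le> b + k * int n"
    using q by (auto simp: Zs_def sg_def ab)
  moreover have "2*(a mod 2) \<le> b" "b < 2*(a mod 2) + int n" using p ab by (auto simp: Zs_def)
  ultimately have "k * int n < int n" "- int n < k * int n" by linarith+
  then have "k < 1" "-1 < k" using assms(3)
    by (metis mult.commute mult_less_cancel_left_pos mult.right_neutral of_nat_0_less_iff,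
        metis mult.commute mult_less_cancel_left_pos mult_minus1_right of_nat_0_less_iff)
  then have "k = 0" by simp
  then show "sg m n k p = p" by simp
qed

lemma tour_of_Bp:
  assumes "odd m" "0 < m" "0 < n" "Bp (int m) (int n)"
  shows "\<exists>p N. generating_tour m n p N"
  using assms(4) FD_Zs[OF assms(1,2,3)] tour_of_FD[OF assms(2,3)] unfolding Bp_def by blast

lemma cert_helper:
  assumes "L \<noteq> []" "hd L = s" "distinct L" "length L = card S" "finite S" "list_all (\<lambda>p. p \<in> S) L" "kchain L"
  shows "HP S s (last L)"
  using HP_cert[of L S] assms by (simp add: list_all_iff subset_iff)

lemma cert_A_4_2: "Ap 4 2"
proof -
  let ?L = "[(0, 0), (1, 2), (3, 3), (2, 1), (1, 3), (0, 1), (2, 0), (3, 2)] :: (int\<times>int) list"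
  have "HP (Zs 0 4 0 2) (0,0) (last ?L)"
    by (rule cert_helper) (simp_all add: card_Zs finite_Zs mem_Zs knight_adj_iff)
  moreover have "knight_adj (last ?L) (4, 0)" by (simp add: knight_adj_iff)
  ultimately show ?thesis unfolding Ap_def by blast
qed

lemma cert_A_4_4: "Ap 4 4"
proof -
  let ?L = "[(0, 0), (1, 2), (3, 3), (2, 1), (0, 2), (1, 4), (3, 5), (2, 3), (1, 5), (0, 3), (2, 2), (3, 4), (1, 3), (0, 1), (2, 0), (3, 2)] :: (int\<times>int) list"
  have "HP (Zs 0 4 0 4) (0,0) (last ?L)"
    by (rule cert_helper) (simp_all add: card_Zs finite_Zs mem_Zs knight_adj_iff)
  moreover have "knight_adj (last ?L) (4, 0)" by (simp add: knight_adj_iff)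
  ultimately show ?thesis unfolding Ap_def by blast
qed

lemma cert_B_5_2: "Bp 5 2"
proof -
  let ?L = "[(0, 0), (1, 2), (3, 3), (4, 1), (2, 0), (0, 1), (1, 3), (3, 2), (4, 0), (2, 1)] :: (int\<times>int) list"
  have "HP (Zs 0 5 0 2) (0,0) (last ?L)"
    by (rule cert_helper) (simp_all add: card_Zs finite_Zs mem_Zs knight_adj_iff)
  moreover have "knight_adj (last ?L) (5 - 1, 2)" by (simp add: knight_adj_iff)
  ultimately show ?thesis unfolding Bp_def by blast
qed

lemma cert_B_5_4: "Bp 5 4"
proof -
  let ?L = "[(0, 0), (1, 2), (3, 3), (4, 1), (2, 0), (0, 1), (1, 3), (3, 2), (4, 0), (2, 1), (0, 2), (1, 4), (3, 5), (4, 3), (2, 2), (0, 3), (1, 5), (3, 4), (4, 2), (2, 3)] :: (int\<times>int) list"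
  have "HP (Zs 0 5 0 4) (0,0) (last ?L)"
    by (rule cert_helper) (simp_all add: card_Zs finite_Zs mem_Zs knight_adj_iff)
  moreover have "knight_adj (last ?L) (5 - 1, 4)" by (simp add: knight_adj_iff)
  ultimately show ?thesis unfolding Bp_def by blast
qed

lemma cert_B_7_2: "Bp 7 2"
proof -
  let ?L = "[(0, 0), (1, 2), (3, 3), (2, 1), (1, 3), (0, 1), (2, 0), (3, 2), (5, 3), (6, 1), (4, 0), (5, 2), (6, 0), (4, 1)] :: (int\<times>int) list"
  have "HP (Zs 0 7 0 2) (0,0) (last ?L)"
    by (rule cert_helper) (simp_all add: card_Zs finite_Zs mem_Zs knight_adj_iff)
  moreover have "knight_adj (last ?L) (7 - 1, 2)" by (simp add: knight_adj_iff)
  ultimately show ?thesis unfolding Bp_def by blast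
qed

lemma cert_B_7_4: "Bp 7 4"
proof -
  let ?L = "[(0, 0), (1, 2), (2, 0), (0, 1), (1, 3), (3, 2), (5, 3), (6, 1), (4, 0), (5, 2), (6, 0), (4, 1), (6, 2), (5, 4), (3, 3), (2, 1), (0, 2), (1, 4), (3, 5), (2, 3), (4, 2), (6, 3), (5, 5), (3, 4), (1, 5), (0, 3), (2, 2), (4, 3)] :: (int\<times>int) list"
  have "HP (Zs 0 7 0 4) (0,0) (last ?L)"
    by (rule cert_helper) (simp_all add: card_Zs finite_Zs mem_Zs knight_adj_iff)
  moreover have "knight_adj (last ?L) (7 - 1, 4)" by (simp add: knight_adj_iff)
  ultimately show ?thesis unfolding Bp_def by blast
qed

lemma cert_B_5_5: "Bp 5 5"
proof -
  let ?L = "[(0, 0), (1, 2), (0, 4), (1, 6), (3, 5), (4, 3), (2, 4), (3, 6), (4, 4), (3, 2), (4, 0), (2, 1), (4, 2), (2, 3), (0, 2), (1, 4), (2, 2), (0, 3), (1, 5), (3, 4), (1, 3), (0, 1), (2, 0), (4, 1), (3, 3)] :: (int\<times>int) list"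
  have "HP (Zs 0 5 0 5) (0,0) (last ?L)"
    by (rule cert_helper) (simp_all add: card_Zs finite_Zs mem_Zs knight_adj_iff)
  moreover have "knight_adj (last ?L) (5 - 1, 5)" by (simp add: knight_adj_iff)
  ultimately show ?thesis unfolding Bp_def by blast
qed

lemma cert_B_5_7: "Bp 5 7"
proof -
  let ?L = "[(0, 0), (1, 2), (0, 4), (1, 6), (3, 7), (1, 8), (0, 6), (2, 5), (4, 6), (3, 8), (1, 7), (0, 5), (2, 6), (4, 5), (3, 3), (4, 1), (2, 0), (0, 1), (1, 3), (2, 1), (4, 0), (3, 2), (4, 4), (3, 6), (2, 4), (0, 3), (1, 5), (3, 4), (4, 2), (2, 3), (0, 2), (1, 4), (2, 2), (4, 3), (3, 5)] :: (int\<times>int) list"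
  have "HP (Zs 0 5 0 7) (0,0) (last ?L)"
    by (rule cert_helper) (simp_all add: card_Zs finite_Zs mem_Zs knight_adj_iff)
  moreover have "knight_adj (last ?L) (5 - 1, 7)" by (simp add: knight_adj_iff)
  ultimately show ?thesis unfolding Bp_def by blast
qed

lemma cert_B_3_5: "Bp 3 5"
proof -
  let ?L = "[(0, 0), (2, 1), (0, 2), (1, 4), (2, 2), (0, 3), (1, 5), (2, 3), (0, 4), (1, 6), (2, 4), (1, 2), (2, 0), (0, 1), (1, 3)] :: (int\<times>int) list"
  have "HP (Zs 0 3 0 5) (0,0) (last ?L)"
    by (rule cert_helper) (simp_all add: card_Zs finite_Zs mem_Zs knight_adj_iff)
  moreover have "knight_adj (last ?L) (3 - 1, 5)" by (simp add: knight_adj_iff)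
  ultimately show ?thesis unfolding Bp_def by blast
qed

lemma cert_B_3_6: "Bp 3 6"
proof -
  let ?L = "[(0, 0), (2, 1), (0, 2), (1, 4), (2, 2), (0, 3), (1, 5), (2, 3), (0, 4), (1, 6), (2, 4), (1, 2), (2, 0), (0, 1), (1, 3), (2, 5), (1, 7), (0, 5)] :: (int\<times>int) list"
  have "HP (Zs 0 3 0 6) (0,0) (last ?L)"
    by (rule cert_helper) (simp_all add: card_Zs finite_Zs mem_Zs knight_adj_iff)
  moreover have "knight_adj (last ?L) (3 - 1, 6)" by (simp add: knight_adj_iff)
  ultimately show ?thesis unfolding Bp_def by blast
qed

lemma cert_B_3_7: "Bp 3 7"
proof -
  let ?L = "[(0, 0), (2, 1), (0, 2), (2, 3), (0, 4), (1, 6), (2, 4), (1, 2), (2, 0), (0, 1), (1, 3), (0, 5), (1, 7), (2, 5), (0, 6), (1, 8), (2, 6), (1, 4), (2, 2), (0, 3), (1, 5)] :: (int\<times>int) list"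
  have "HP (Zs 0 3 0 7) (0,0) (last ?L)"
    by (rule cert_helper) (simp_all add: card_Zs finite_Zs mem_Zs knight_adj_iff)
  moreover have "knight_adj (last ?L) (3 - 1, 7)" by (simp add: knight_adj_iff)
  ultimately show ?thesis unfolding Bp_def by blast
qed

lemma cert_B_3_8: "Bp 3 8"
proof -
  let ?L = "[(0, 0), (2, 1), (0, 2), (2, 3), (1, 5), (2, 7), (1, 9), (0, 7), (2, 6), (1, 8), (0, 6), (1, 4), (2, 2), (0, 3), (2, 4), (0, 5), (1, 7), (2, 5), (1, 3), (0, 1), (2, 0), (1, 2), (0, 4), (1, 6)] :: (int\<times>int) list"
  have "HP (Zs 0 3 0 8) (0,0) (last ?L)"
    by (rule cert_helper) (simp_all add: card_Zs finite_Zs mem_Zs knight_adj_iff)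
  moreover have "knight_adj (last ?L) (3 - 1, 8)" by (simp add: knight_adj_iff)
  ultimately show ?thesis unfolding Bp_def by blast
qed

lemma cert_B_3_9: "Bp 3 9"
proof -
  let ?L = "[(0, 0), (2, 1), (0, 2), (2, 3), (1, 5), (0, 3), (2, 2), (1, 4), (2, 6), (1, 8), (0, 6), (2, 7), (1, 9), (0, 7), (2, 8), (1, 10), (0, 8), (1, 6), (0, 4), (2, 5), (1, 3), (0, 1), (2, 0), (1, 2), (2, 4), (0, 5), (1, 7)] :: (int\<times>int) list"
  have "HP (Zs 0 3 0 9) (0,0) (last ?L)"
    by (rule cert_helper) (simp_all add: card_Zs finite_Zs mem_Zs knight_adj_iff)
  moreover have "knight_adj (last ?L) (3 - 1, 9)" by (simp add: knight_adj_iff)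
  ultimately show ?thesis unfolding Bp_def by blast
qed

lemma cert_B_3_10: "Bp 3 10"
proof -
  let ?L = "[(0, 0), (2, 1), (0, 2), (2, 3), (1, 5), (0, 3), (2, 2), (1, 4), (2, 6), (1, 8), (0, 6), (2, 7), (1, 9), (0, 7), (2, 8), (1, 10), (0, 8), (1, 6), (0, 4), (2, 5), (1, 3), (0, 1), (2, 0), (1, 2), (2, 4), (0, 5), (1, 7), (2, 9), (1, 11), (0, 9)] :: (int\<times>int) list"
  have "HP (Zs 0 3 0 10) (0,0) (last ?L)"
    by (rule cert_helper) (simp_all add: card_Zs finite_Zs mem_Zs knight_adj_iff)
  moreover have "knight_adj (last ?L) (3 - 1, 10)" by (simp add: knight_adj_iff)
  ultimately show ?thesis unfolding Bp_def by blast
qed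

lemma cert_B_3_11: "Bp 3 11"
proof -
  let ?L = "[(0, 0), (2, 1), (0, 2), (2, 3), (1, 5), (0, 3), (2, 2), (1, 4), (2, 6), (0, 7), (1, 9), (2, 7), (0, 8), (1, 10), (2, 8), (0, 9), (1, 11), (2, 9), (1, 7), (0, 5), (2, 4), (1, 6), (0, 4), (1, 2), (2, 0), (0, 1), (1, 3), (2, 5), (0, 6), (1, 8), (2, 10), (1, 12), (0, 10)] :: (int\<times>int) list"
  have "HP (Zs 0 3 0 11) (0,0) (last ?L)"
    by (rule cert_helper) (simp_all add: card_Zs finite_Zs mem_Zs knight_adj_iff)
  moreover have "knight_adj (last ?L) (3 - 1, 11)" by (simp add: knight_adj_iff)
  ultimately show ?thesis unfolding Bp_def by blast
qed

lemma cert_B_3_12: "Bp 3 12"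
proof -
  let ?L = "[(0, 0), (2, 1), (0, 2), (2, 3), (1, 5), (0, 3), (2, 2), (1, 4), (2, 6), (0, 7), (2, 8), (1, 10), (0, 8), (1, 6), (0, 4), (2, 5), (1, 3), (0, 1), (2, 0), (1, 2), (2, 4), (0, 5), (1, 7), (0, 9), (1, 11), (2, 9), (0, 10), (1, 12), (2, 10), (1, 8), (0, 6), (2, 7), (1, 9), (2, 11), (1, 13), (0, 11)] :: (int\<times>int) list"
  have "HP (Zs 0 3 0 12) (0,0) (last ?L)"
    by (rule cert_helper) (simp_all add: card_Zs finite_Zs mem_Zs knight_adj_iff)
  moreover have "knight_adj (last ?L) (3 - 1, 12)" by (simp add: knight_adj_iff)
  ultimately show ?thesis unfolding Bp_def by blast
qed

lemma cert_B_3_13: "Bp 3 13"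
proof -
  let ?L = "[(0, 0), (2, 1), (0, 2), (2, 3), (1, 5), (0, 3), (2, 2), (1, 4), (2, 6), (0, 7), (2, 8), (1, 6), (0, 4), (2, 5), (1, 3), (0, 1), (2, 0), (1, 2), (2, 4), (0, 5), (1, 7), (0, 9), (2, 10), (1, 12), (0, 10), (1, 8), (0, 6), (2, 7), (1, 9), (0, 11), (1, 13), (2, 11), (0, 12), (1, 14), (2, 12), (1, 10), (0, 8), (2, 9), (1, 11)] :: (int\<times>int) list"
  have "HP (Zs 0 3 0 13) (0,0) (last ?L)"
    by (rule cert_helper) (simp_all add: card_Zs finite_Zs mem_Zs knight_adj_iff)
  moreover have "knight_adj (last ?L) (3 - 1, 13)" by (simp add: knight_adj_iff)
  ultimately show ?thesis unfolding Bp_def by blast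
qed

lemma cert_B_3_14: "Bp 3 14"
proof -
  let ?L = "[(0, 0), (2, 1), (0, 2), (2, 3), (1, 5), (0, 3), (2, 2), (1, 4), (2, 6), (0, 7), (2, 8), (1, 6), (0, 4), (2, 5), (1, 3), (0, 1), (2, 0), (1, 2), (2, 4), (0, 5), (1, 7), (0, 9), (2, 10), (1, 12), (0, 10), (1, 8), (0, 6), (2, 7), (1, 9), (2, 11), (1, 13), (0, 11), (2, 12), (1, 14), (0, 12), (1, 10), (0, 8), (2, 9), (1, 11), (2, 13), (1, 15), (0, 13)] :: (int\<times>int) list"
  have "HP (Zs 0 3 0 14) (0,0) (last ?L)"
    by (rule cert_helper) (simp_all add: card_Zs finite_Zs mem_Zs knight_adj_iff)
  moreover have "knight_adj (last ?L) (3 - 1, 14)" by (simp add: knight_adj_iff)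
  ultimately show ?thesis unfolding Bp_def by blast
qed

lemma iter_step:
  assumes "P x0" "\<And>x. P x \<Longrightarrow> P (x + d)"
  shows "P (x0 + d * int t)"
proof (induction t)
  case 0 then show ?case using assms(1) by simp
next
  case (Suc t)
  have "P (x0 + d * int t + d)" using assms(2)[OF Suc] .
  then show ?case by (simp add: algebra_simps)
qed

lemma iter_from:
  assumes "P x0" "\<And>x. P x \<Longrightarrow> P (x + d)" "0 < d" "x0 \<le> x" "x mod d = x0 mod d"
  shows "P (x::int)"
proof -
  have "d dvd (x - x0)" using assms(5) by (simp add: mod_eq_dvd_iff)
  then obtain k where k: "x - x0 = d * k" by blast
  have "0 \<le> k" using k assms(3,4) by (metis diff_ge_0_iff_ge zero_le_mult_iff not_le)
  then have "x = x0 + d * int (nat k)" using k by simp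
  then show ?thesis using iter_step[of P x0 d "nat k"] assms(1,2) by simp
qed

lemma B_heights:
  assumes "odd m" "5 \<le> m"
  shows "Bp m 2 \<and> Bp m 4"
proof -
  let ?P = "\<lambda>m. Bp m 2 \<and> Bp m 4"
  have step: "?P x \<Longrightarrow> ?P (x + 4)" if "x \<ge> 0" for x
    using stack_AB[of 4 x 2] stack_AB[of 4 x 4] cert_A_4_2 cert_A_4_4 that by (simp add: add.commute)
  have step': "?P x \<Longrightarrow> ?P (x + 4)" if "x \<ge> 5" for x using step that by simp
  let ?Q = "\<lambda>x. x \<ge> 5 \<and> ?P x"
  have stepQ: "?Q x \<Longrightarrow> ?Q (x + 4)" for x using step' by auto
  show ?thesis
  proof (cases "m mod 4 = 1")
    case True
    have "?Q m" by (rule iter_from[of ?Q 5 4]) (use cert_B_5_2 cert_B_5_4 stepQ True assms in auto)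
    then show ?thesis by simp
  next
    case False
    then have "m mod 4 = 3" "7 \<le> m" using assms by presburger+
    have "?Q m" by (rule iter_from[of ?Q 7 4]) (use cert_B_7_2 cert_B_7_4 stepQ \<open>m mod 4 = 3\<close> \<open>7 \<le> m\<close> assms in auto)
    then show ?thesis by simp
  qed
qed

lemma B_even_n:
  assumes "odd m" "5 \<le> m" "even n" "2 \<le> n"
  shows "Bp m n"
proof -
  have b2: "Bp m 2" and b4: "Bp m 4" using B_heights[OF assms(1,2)] by auto
  let ?Q = "\<lambda>x. x \<ge> 2 \<and> Bp m x"
  have stepQ: "?Q x \<Longrightarrow> ?Q (x + 4)" for x
    using col_BBB[OF assms(1), of x 2 2] b2 by (auto simp: ac_simps)
  show ?thesis
  proof (cases "n mod 4 = 2")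
    case True
    have "?Q n" by (rule iter_from[of ?Q 2 4]) (use b2 stepQ True assms in auto)
    then show ?thesis by simp
  next
    case False
    then have "n mod 4 = 0" using assms(3) by presburger
    have "?Q n" by (rule iter_from[of ?Q 4 4]) (use b4 stepQ \<open>n mod 4 = 0\<close> assms in auto)
    then show ?thesis by simp
  qed
qed

lemma B_5_odd:
  assumes "odd n" "5 \<le> n"
  shows "Bp 5 n"
proof -
  let ?Q = "\<lambda>x. x \<ge> 2 \<and> Bp 5 x"
  have stepQ: "?Q x \<Longrightarrow> ?Q (x + 4)" for x
    using col_BBB[of 5 x 2 2] cert_B_5_2 by (auto simp: ac_simps)
  show ?thesis
  proof (cases "n mod 4 = 1")
    case True
    have "?Q n" by (rule iter_from[of ?Q 5 4]) (use cert_B_5_5 stepQ True assms in auto)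
    then show ?thesis by simp
  next
    case False
    then have "n mod 4 = 3" "7 \<le> n" using assms by presburger+
    have "?Q n" by (rule iter_from[of ?Q 7 4]) (use cert_B_5_7 stepQ \<open>n mod 4 = 3\<close> \<open>7 \<le> n\<close> assms in auto)
    then show ?thesis by simp
  qed
qed

lemma B_3:
  assumes "5 \<le> n"
  shows "Bp 3 n"
proof -
  let ?Q = "\<lambda>x. x \<ge> 0 \<and> Bp 3 x"
  have stepQ: "?Q x \<Longrightarrow> ?Q (x + 10)" for x
    using col_BBB[of 3 x 5 5] cert_B_3_5 by (auto simp: add.assoc)
  have base: "?Q (5 + (n - 5) mod 10)"
  proof -
    define r where "r = (n - 5) mod 10"
    have "r = 0 \<or> r = 1 \<or> r = 2 \<or> r = 3 \<or> r = 4 \<or> r = 5 \<or> r = 6 \<or> r = 7 \<or> r = 8 \<or> r = 9"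
      unfolding r_def by presburger
    then have "Bp 3 (5 + r)" using cert_B_3_5 cert_B_3_6 cert_B_3_7 cert_B_3_8 cert_B_3_9 cert_B_3_10
        cert_B_3_11 cert_B_3_12 cert_B_3_13 cert_B_3_14 by (elim disjE) simp_all
    moreover have "0 \<le> 5 + r" unfolding r_def by simp
    ultimately show ?thesis unfolding r_def by simp
  qed
  have f1: "5 + (n - 5) mod 10 \<le> n" using assms zmod_le_nonneg_dividend[of "n - 5" 10] by linarith
  have f2: "n mod 10 = (5 + (n - 5) mod 10) mod 10" by (simp add: mod_add_right_eq mod_diff_left_eq)
  have d10: "(0::int) < 10" by simp
  have "?Q n" using iter_from[of ?Q "5 + (n - 5) mod 10" 10, OF base stepQ d10 f1 f2] by blast
  then show ?thesis by simp
qed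

lemma adj_sg: "knight_adj (sg m n k x) (sg m n k y) = knight_adj x y"
  by (simp add: knight_adj_iff sg_def abs_minus_commute)

lemma inj_sg: "inj (sg m n k)"
proof
  fix x y assume "sg m n k x = sg m n k y"
  then have "sg m n (-k) (sg m n k x) = sg m n (-k) (sg m n k y)" by simp
  then show "x = y" by (simp add: sg_sg)
qed

lemma sg_strip: "in_strip m p \<Longrightarrow> in_strip m (sg m n k p)"
  by (auto simp: in_strip_def sg_def)

lemma sg_odd_n: "odd n \<Longrightarrow> sg m n t p = sg m 1 (t * int n) p"
  by (simp add: sg_def)

lemma rho_trick:
  assumes m: "0 < m" and fd: "FD m 1 D" and hp: "HP D (0,0) e" and ea: "knight_adj e (int m - 1, 1)"
    and k: "odd k"
  shows "\<exists>p N. generating_tour m k p N"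
proof -
  define U where "U j = (\<Union>i<j. sg m 1 (int i) ` D)" for j
  have fD: "finite D" and sD: "\<forall>p\<in>D. in_strip m p" and cD: "card D = m"
    and oD: "\<forall>p\<in>D. \<forall>k. sg m 1 k p \<in> D \<longrightarrow> sg m 1 k p = p"
    using fd unfolding FD_def by auto
  have key: "x \<in> D \<Longrightarrow> y \<in> D \<Longrightarrow> sg m 1 s x = y \<Longrightarrow> s = 0 \<and> x = y" for x y s
  proof -
    assume xy: "x \<in> D" "y \<in> D" "sg m 1 s x = y"
    then have "sg m 1 s x = x" using oD by metis
    then have "snd x + s = snd x" by (metis sg_def snd_conv mult.right_neutral of_nat_1)
    then show "s = 0 \<and> x = y" using xy \<open>sg m 1 s x = x\<close> by simp
  qed
  have disj: "U j \<inter> sg m 1 (int j) ` D = {}" for j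
  proof (rule ccontr)
    assume "U j \<inter> sg m 1 (int j) ` D \<noteq> {}"
    then obtain i x y where ixy: "i < j" "x \<in> D" "y \<in> D" "sg m 1 (int i) x = sg m 1 (int j) y"
      unfolding U_def by blast
    then have "sg m 1 (int i - int j) x = y"
      by (metis add.commute diff_add_cancel sg_sg inj_sg injD)
    then show False using key ixy by fastforce
  qed
  have U_Suc: "U (Suc j) = U j \<union> sg m 1 (int j) ` D" for j
    unfolding U_def by (simp add: lessThan_Suc Un_commute)
  have HPU: "HP (U (Suc j)) (0,0) (sg m 1 (int j) e)" for j
  proof (induction j)
    case 0 then show ?case using hp by (simp add: U_def lessThan_Suc)
  next
    case (Suc j)
    have h2: "HP (sg m 1 (int (Suc j)) ` D) (sg m 1 (int (Suc j)) (0,0)) (sg m 1 (int (Suc j)) e)"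
      by (rule HP_image[OF hp inj_sg adj_sg])
    have a: "knight_adj (sg m 1 (int j) e) (sg m 1 (int (Suc j)) (0,0))"
    proof -
      have "knight_adj (sg m 1 (int j) e) (sg m 1 (int j) (int m - 1, 1))" using ea adj_sg by blast
      moreover have "sg m 1 (int j) (int m - 1, 1) = sg m 1 (int (Suc j)) (0,0)"
        by (simp add: sg_def)
      ultimately show ?thesis by simp
    qed
    show ?case unfolding U_Suc[of "Suc j"] by (rule HP_join[OF Suc h2 disj a])
  qed
  have cardU: "finite (U j) \<and> card (U j) = j * m" for j
  proof (induction j)
    case 0 then show ?case by (simp add: U_def)
  next
    case (Suc j)
    have "card (sg m 1 (int j) ` D) = m" using cD card_image[OF inj_on_subset[OF inj_sg subset_UNIV]] by metis
    then show ?case using Suc disj[of j] fD by (simp add: U_Suc card_Un_disjoint)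
  qed
  obtain k' where k': "k = Suc k'" using k by (cases k) auto
  have fdk: "FD m k (U k)"
    unfolding FD_def
  proof (intro conjI ballI allI impI)
    show "finite (U k)" using cardU by blast
    show "card (U k) = m * k" using cardU by simp
  next
    fix p assume "p \<in> U k" then show "in_strip m p" using sD sg_strip unfolding U_def by blast
  next
    fix p t assume p: "p \<in> U k" and q: "sg m k t p \<in> U k"
    obtain i x where ix: "i < k" "x \<in> D" "p = sg m 1 (int i) x" using p unfolding U_def by blast
    obtain j y where jy: "j < k" "y \<in> D" "sg m k t p = sg m 1 (int j) y" using q unfolding U_def by blast
    have "sg m 1 (int j) y = sg m 1 (t * int k + int i) x"
      using jy(3) ix(3) by (simp add: sg_odd_n[OF k] sg_sg)
    then have "sg m 1 (- int j) (sg m 1 (int j) y) = sg m 1 (- int j) (sg m 1 (t * int k + int i) x)" by simp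
    then have "sg m 1 (t * int k + int i - int j) x = y" by (simp add: sg_sg)
    then have e0: "t * int k + int i - int j = 0" using key ix(2) jy(2) by blast
    have "t = 0"
    proof (rule ccontr)
      assume "t \<noteq> 0"
      then have "1 \<le> \<bar>t\<bar>" by simp
      then have "1 * int k \<le> \<bar>t\<bar> * int k" by (rule mult_right_mono) simp
      then have "\<bar>t * int k\<bar> \<ge> int k" by (simp add: abs_mult)
      moreover have "\<bar>int i - int j\<bar> < int k" using ix(1) jy(1) by linarith
      ultimately show False using e0 by linarith
    qed
    then show "sg m k t p = p" by simp
  qed
  have last_adj: "knight_adj (sg m 1 (int k') e) (int m - 1, int k)"
  proof -
    have "knight_adj (sg m 1 (int k') e) (sg m 1 (int k') (int m - 1, 1))" using ea adj_sg by blast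
    moreover have "sg m 1 (int k') (int m - 1, 1) = (int m - 1, int k)"
      using k k' by (auto simp: sg_def)
    ultimately show ?thesis by simp
  qed
  show ?thesis
    using tour_of_FD[OF m _ fdk _ last_adj] HPU[of k'] k k' by simp
qed

lemma kchain_nthI: "(\<And>i. Suc i < length L \<Longrightarrow> knight_adj (L!i) (L!Suc i)) \<Longrightarrow> kchain L"
proof (induction L)
  case Nil then show ?case by simp
next
  case (Cons x xs)
  have "kchain xs" using Cons.IH Cons.prems[of "Suc _"] by simp
  moreover have "xs \<noteq> [] \<longrightarrow> knight_adj x (hd xs)" using Cons.prems[of 0] by (cases xs) auto
  ultimately show ?case by (simp add: kchain_Cons)
qed

definition g1 :: "nat \<Rightarrow> int\<times>int" where "g1 a = (int a, 2 * int (a mod 2))"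

definition L1 :: "nat \<Rightarrow> (int\<times>int) list" where
  "L1 m = [(0,0),(1,2),(2,4),(0,5),(1,3)] @ map g1 [3..<m-2]"

lemma g1_adj: "knight_adj (g1 a) (g1 (Suc a))"
  by (auto simp: g1_def knight_adj_iff mod_Suc)

lemma kchain_g1: "kchain (map g1 [i..<j])"
  by (rule kchain_nthI) (simp add: g1_adj)

lemma L1_props:
  assumes m: "6 \<le> m"
  shows "L1 m \<noteq> [] \<and> distinct (L1 m) \<and> hd (L1 m) = (0,0) \<and> last (L1 m) = g1 (m-3) \<and> kchain (L1 m)
     \<and> length (L1 m) = m"
proof -
  have ne: "[3..<m-2] \<noteq> []" using m by simp
  have inj: "inj g1" by (auto simp: inj_def g1_def)
  have d1: "distinct (map g1 [3..<m-2])" using inj by (simp add: distinct_map inj_on_subset[OF inj subset_UNIV])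
  have d2: "set [(0,0),(1,2),(2,4),(0,5),(1,3)] \<inter> set (map g1 [3..<m-2]) = {}"
    by (auto simp: g1_def)
  have hdm: "hd (map g1 [3..<m-2]) = (3, 2)" using ne m by (simp add: hd_map upt_rec g1_def)
  have lastm: "last (map g1 [3..<m-2]) = g1 (m-3)" using ne m
    by (simp add: last_map)
  have kc: "kchain (L1 m)" unfolding L1_def kchain_append using kchain_g1 ne hdm
    by (simp add: knight_adj_iff)
  show ?thesis using d1 d2 ne lastm kc m by (auto simp: L1_def)
qed

lemma L1_FD:
  assumes m: "6 \<le> m"
  shows "FD m 1 (set (L1 m))"
  unfolding FD_def
proof (intro conjI ballI allI impI)
  have P: "distinct (L1 m)" "length (L1 m) = m" using L1_props[OF m] by auto
  show "finite (set (L1 m))" by simp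
  show "card (set (L1 m)) = m * 1" using P by (simp add: distinct_card)
next
  fix p assume "p \<in> set (L1 m)"
  then show "in_strip m p" using m by (auto simp: L1_def g1_def in_strip_def)
next
  fix p k assume p: "p \<in> set (L1 m)" and q: "sg m 1 k p \<in> set (L1 m)"
  define r where "r x = (if even (snd x) then fst x else int m - 1 - fst x)" for x :: "int\<times>int"
  have rsg: "r (sg m 1 k x) = r x" for x by (auto simp: r_def sg_def)
  have "map r (L1 m) = [0,1,2,int m - 1, int m - 2] @ map int [3..<m-2]"
    by (simp add: L1_def r_def g1_def)
  moreover have "distinct ([0,1,2,int m - 1, int m - 2] @ map int [3..<m-2])"
    using m by (auto simp: distinct_map)
  ultimately have "inj_on r (set (L1 m))" by (metis distinct_map)
  then show "sg m 1 k p = p" using p q rsg by (metis inj_onD)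
qed

lemma odd_n_tour:
  assumes "6 \<le> m" "odd n"
  shows "\<exists>p N. generating_tour m n p N"
proof -
  have P: "L1 m \<noteq> []" "distinct (L1 m)" "hd (L1 m) = (0,0)" "last (L1 m) = g1 (m-3)" "kchain (L1 m)"
    using L1_props[OF assms(1)] by auto
  have hp: "HP (set (L1 m)) (0,0) (g1 (m-3))" unfolding HP_def using P by blast
  have "(m - 3) mod 2 = 0 \<or> (m - 3) mod 2 = 1" by auto
  then have "knight_adj (g1 (m-3)) (int m - 1, 1)" using assms(1)
    by (auto simp: g1_def knight_adj_iff of_nat_diff)
  then show ?thesis using rho_trick[OF _ L1_FD[OF assms(1)] hp _ assms(2)] assms(1) by simp
qed

lemma FD_list:
  assumes "0 < n" "distinct (map (canon m n) L)" "length L = m * n" "list_all (in_strip m) L"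
  shows "FD m n (set L)"
  unfolding FD_def
proof (intro conjI ballI allI impI)
  show "finite (set L)" by simp
  have "distinct L" using assms(2) by (simp add: distinct_map)
  then show "card (set L) = m * n" using assms(3) by (simp add: distinct_card)
next
  fix p assume "p \<in> set L" then show "in_strip m p" using assms(4) by (simp add: list_all_iff)
next
  fix p k assume p: "p \<in> set L" and q: "sg m n k p \<in> set L"
  have "inj_on (canon m n) (set L)" using assms(2) by (simp add: distinct_map)
  then show "sg m n k p = p" using p q canon_sg[OF assms(1)] by (metis inj_onD)
qed

lemma tour_list:
  assumes "0 < m" "0 < n" "distinct (map (canon m n) L)" "length L = m * n" "list_all (in_strip m) L"
    "L \<noteq> []" "hd L = (0,0)" "kchain L" "knight_adj (last L) (int m - 1, int n)"
  shows "\<exists>p N. generating_tour m n p N"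
proof -
  have "HP (set L) (0,0) (last L)" unfolding HP_def using assms(3,6,7,8) by (auto simp: distinct_map)
  then show ?thesis using tour_of_FD[OF assms(1,2) FD_list[OF assms(2,3,4,5)] _ assms(9)] by blast
qed

lemma tour_3_3: "\<exists>p N. generating_tour 3 3 p N"
  by (rule tour_list[where L="[(0,0),(1,2),(2,4),(1,6),(2,8),(0,9),(1,7),(2,5),(0,4)]"])
     (simp_all add: canon_def in_strip_def knight_adj_iff)

lemma tour_5_3: "\<exists>p N. generating_tour 5 3 p N"
  by (rule tour_list[where L="[(0,0),(1,2),(2,4),(3,6),(4,4),(3,2),(4,0),(3,-2),(4,-4),(2,-3),(0,-2),(1,0),(0,2),(1,4),(2,2)]"])
     (simp_all add: canon_def in_strip_def knight_adj_iff)

definition moves :: "(int\<times>int) list" where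
  "moves = [(1,2),(2,1),(-1,2),(-2,1),(1,-2),(2,-1),(-1,-2),(-2,-1)]"

primrec srch :: "nat \<Rightarrow> nat \<Rightarrow> nat \<Rightarrow> (int\<times>int) list \<Rightarrow> int\<times>int \<Rightarrow> bool" where
  "srch m n 0 vis p = (p = (int m - 1, int n) \<or> p = (int m - 1, - int n))"
| "srch m n (Suc k) vis p = list_ex (\<lambda>d. let q = (fst p + fst d, snd p + snd d) in
      0 \<le> fst q \<and> fst q < int m \<and> (k = 0 \<or> canon m n q \<notin> set vis) \<and> srch m n k (canon m n q # vis) q) moves"

lemma srch_3_1: "\<not> srch 3 1 3 [(0,0)] (0,0)"
  by code_simp
lemma srch_3_2: "\<not> srch 3 2 6 [(0,0)] (0,0)"
  by code_simp
lemma srch_5_1: "\<not> srch 5 1 5 [(0,0)] (0,0)"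
  by code_simp
lemma srch_3_4: "\<not> srch 3 4 12 [(0,0)] (0,0)"
  by code_simp

lemma noncons_bound:
  assumes "J \<subseteq> {b..<b+2*k}" "\<forall>i\<in>J. Suc i \<notin> J"
  shows "card J \<le> k"
proof -
  have "inj_on (\<lambda>i. (i - b) div 2) J"
  proof
    fix x y assume xy: "x \<in> J" "y \<in> J" "(x - b) div 2 = (y - b) div 2"
    have "x \<ge> b" "y \<ge> b" using xy assms(1) by auto
    show "x = y"
    proof (rule ccontr)
      assume "x \<noteq> y"
      have e1: "x - b = 2 * ((x-b) div 2) + (x-b) mod 2" "y - b = 2 * ((y-b) div 2) + (y-b) mod 2" by simp_all
      have e2: "(x-b) mod 2 < 2" "(y-b) mod 2 < 2" by simp_all
      have "y = Suc x \<or> x = Suc y" using e1 e2 xy(3) \<open>x \<ge> b\<close> \<open>y \<ge> b\<close> \<open>x \<noteq> y\<close> by arith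
      then show False using xy assms(2) by blast
    qed
  qed
  moreover have "(\<lambda>i. (i - b) div 2) ` J \<subseteq> {..<k}"
  proof
    fix z assume "z \<in> (\<lambda>i. (i - b) div 2) ` J"
    then obtain i where "i \<in> J" "z = (i - b) div 2" by blast
    then have "b \<le> i" "i < b + 2*k" using assms(1) by auto
    then have "i - b < k * 2" by linarith
    then show "z \<in> {..<k}" using \<open>z = _\<close> by (simp add: div_less_iff_less_mult)
  qed
  ultimately show ?thesis using card_inj_on_le[of _ J "{..<k}"] by fastforce
qed

lemma noncons_full:
  assumes "I \<subseteq> {a..<a+2*k-1}" "\<forall>i\<in>I. Suc i \<notin> I" "k \<le> card I" "i \<in> I"
  shows "even (i - a)"
  using assms
proof (induction k arbitrary: a I)
  case 0 then show ?case by auto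
next
  case (Suc k)
  have fin: "finite I" using Suc.prems(1) finite_subset by blast
  have aI: "a \<in> I"
  proof (rule ccontr)
    assume "a \<notin> I"
    have "I \<subseteq> {Suc a..<Suc a+2*k}"
    proof
      fix x assume x: "x \<in> I"
      then have "a \<le> x" "x < a + 2 * Suc k - 1" using Suc.prems(1) by auto
      moreover have "x \<noteq> a" using x \<open>a \<notin> I\<close> by blast
      ultimately show "x \<in> {Suc a..<Suc a+2*k}" by simp
    qed
    then have "card I \<le> k" using noncons_bound Suc.prems(2) by blast
    then show False using Suc.prems(3) by simp
  qed
  have a1: "Suc a \<notin> I" using aI Suc.prems(2) by blast
  define I' where "I' = I - {a}"
  have sub: "I' \<subseteq> {a+2..<(a+2)+2*k-1}"
  proof
    fix x assume x: "x \<in> I'"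
    then have "a \<le> x" "x < a + 2 * Suc k - 1" "x \<noteq> a" "x \<noteq> Suc a" using Suc.prems(1) a1 unfolding I'_def by auto
    then show "x \<in> {a+2..<(a+2)+2*k-1}" by simp
  qed
  have nc: "\<forall>i\<in>I'. Suc i \<notin> I'" using Suc.prems(2) unfolding I'_def by blast
  have cI': "k \<le> card I'" using Suc.prems(3) aI fin unfolding I'_def by simp
  show ?case
  proof (cases "i = a")
    case True then show ?thesis by simp
  next
    case False
    then have "i \<in> I'" using Suc.prems(4) I'_def by blast
    then have "even (i - (a+2))" using Suc.IH[OF sub nc cI'] by blast
    moreover have "i \<ge> a + 2" using \<open>i \<in> I'\<close> sub by auto
    ultimately show ?thesis by presburger
  qed
qed

lemma odd12: "\<bar>x::int\<bar> = 1 \<Longrightarrow> \<bar>y\<bar> = 2 \<Longrightarrow> odd (x + y)"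
proof -
  assume "\<bar>x\<bar> = 1" "\<bar>y\<bar> = 2"
  then have "x = 1 \<or> x = -1" "y = 2 \<or> y = -2" by linarith+
  then show ?thesis by auto
qed

lemma adj_parity: "knight_adj p q \<Longrightarrow> even (fst p + snd p) \<longleftrightarrow> odd (fst q + snd q)"
proof -
  assume "knight_adj p q"
  then have "odd ((fst p - fst q) + (snd p - snd q))"
    unfolding knight_adj_iff using odd12 by (metis add.commute)
  then show ?thesis by presburger
qed

context
  fixes m n :: nat and p :: "nat \<Rightarrow> int\<times>int" and N :: nat
  assumes gt: "generating_tour m n p N" and npos: "0 < n"
begin

lemma gt_parts:
  shows "p 0 = (0,0)" "\<forall>i\<le>N. in_strip m (p i)" "\<forall>i<N. knight_adj (p i) (p (Suc i))"
    "\<forall>i<N. \<forall>j<N. i \<noteq> j \<longrightarrow> \<not> same_orbit m n (p i) (p j)"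
    "\<forall>q. in_strip m q \<longrightarrow> (\<exists>i<N. same_orbit m n (p i) q)"
    "p N = (int m - 1, int n) \<or> p N = (int m - 1, - int n)"
  using gt unfolding generating_tour_def mobius_tour_lift_def by auto

lemma tour_N: "N = m * n"
proof -
  let ?f = "\<lambda>i. canon m n (p i)"
  have inj: "inj_on ?f {..<N}"
    using gt_parts(4) same_orbit_canon[OF npos] by (auto simp: inj_on_def)
  have "?f ` {..<N} = rect m n"
  proof
    show "?f ` {..<N} \<subseteq> rect m n"
    proof
      fix x assume "x \<in> ?f ` {..<N}"
      then obtain i where "i < N" "x = ?f i" by blast
      then show "x \<in> rect m n" using gt_parts(2) canon_in_rect[OF npos] by simp
    qed
  next
    show "rect m n \<subseteq> ?f ` {..<N}"
    proof
      fix q assume q: "q \<in> rect m n"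
      then have "in_strip m q" by (auto simp: rect_def in_strip_def)
      then obtain i where "i < N" "same_orbit m n (p i) q" using gt_parts(5) by blast
      then have "?f i = q" using same_orbit_canon[OF npos] canon_rect[OF q] by simp
      then show "q \<in> ?f ` {..<N}" using \<open>i < N\<close> by blast
    qed
  qed
  then have "card {..<N} = card (rect m n)" using card_image[OF inj] by simp
  then show ?thesis by (simp add: card_rect)
qed

lemma tour_parity: "i \<le> N \<Longrightarrow> even (fst (p i) + snd (p i)) \<longleftrightarrow> even i"
proof (induction i)
  case 0 then show ?case using gt_parts(1) by simp
next
  case (Suc i)
  then have "knight_adj (p i) (p (Suc i))" using gt_parts(3) by simp
  then have h1: "even (fst (p i) + snd (p i)) \<longleftrightarrow> odd (fst (p (Suc i)) + snd (p (Suc i)))" by (rule adj_parity)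
  have h2: "even (fst (p i) + snd (p i)) \<longleftrightarrow> even i" using Suc by simp
  show ?case using h1 h2 by (simp only: even_Suc) blast
qed

lemma srch_complete: "srch m n N [(0,0)] (0,0)"
proof -
  have claim: "\<forall>j vis. j + t = N \<longrightarrow> set vis = (\<lambda>i. canon m n (p i)) ` {..j} \<longrightarrow> srch m n t vis (p j)" for t
  proof (induction t)
    case 0 then show ?case using gt_parts(6) by auto
  next
    case (Suc t)
    show ?case
    proof (intro allI impI)
      fix j vis assume j: "j + Suc t = N" and vis: "set vis = (\<lambda>i. canon m n (p i)) ` {..j}"
      let ?q = "p (Suc j)"
      have adj: "knight_adj (p j) ?q" using gt_parts(3) j by simp
      define d where "d = (fst ?q - fst (p j), snd ?q - snd (p j))"
      have dm: "d \<in> set moves"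
      proof -
        obtain x y where xy: "d = (x,y)" by fastforce
        have "\<bar>x\<bar> = 1 \<and> \<bar>y\<bar> = 2 \<or> \<bar>x\<bar> = 2 \<and> \<bar>y\<bar> = 1"
          using adj xy knight_adj_sym unfolding d_def knight_adj_iff by auto
        then have "(x = 1 \<or> x = -1) \<and> (y = 2 \<or> y = -2) \<or> (x = 2 \<or> x = -2) \<and> (y = 1 \<or> y = -1)"
          by linarith
        then show ?thesis unfolding xy moves_def by auto
      qed
      have qd: "(fst (p j) + fst d, snd (p j) + snd d) = ?q" by (simp add: d_def)
      have st: "in_strip m ?q" using gt_parts(2) j by simp
      have nv: "t = 0 \<or> canon m n ?q \<notin> set vis"
      proof (cases "t = 0")
        case False
        have ne: "canon m n (p i) \<noteq> canon m n ?q" if "i \<le> j" for i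
        proof -
          have "i < N" "Suc j < N" "i \<noteq> Suc j" using that j False by arith+
          then have "\<not> same_orbit m n (p i) ?q" using gt_parts(4) by blast
          then show ?thesis using same_orbit_canon[OF npos] by blast
        qed
        show ?thesis
        proof (rule disjI2)
          show "canon m n ?q \<notin> set vis"
          proof
            assume "canon m n ?q \<in> set vis"
            then obtain i where "i \<le> j" "canon m n ?q = canon m n (p i)" using vis by auto
            then show False using ne[OF \<open>i \<le> j\<close>] by simp
          qed
        qed
      qed simp
      have sr: "srch m n t (canon m n ?q # vis) ?q"
        using Suc.IH j vis by (auto simp: atMost_Suc)
      have body: "let q = (fst (p j) + fst d, snd (p j) + snd d) in
          0 \<le> fst q \<and> fst q < int m \<and> (t = 0 \<or> canon m n q \<notin> set vis) \<and> srch m n t (canon m n q # vis) q"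
        unfolding Let_def qd using st nv sr by (simp add: in_strip_def)
      show "srch m n (Suc t) vis (p j)"
        unfolding srch.simps list_ex_iff using dm body by blast
    qed
  qed
  have "set [(0::int,0::int)] = (\<lambda>i. canon m n (p i)) ` {..0}" using gt_parts(1) npos by (simp add: canon_def)
  then have "srch m n N [(0,0)] (p 0)" using claim[of N] by simp
  then show ?thesis using gt_parts(1) by simp
qed

end

lemma nec_even:
  assumes gt: "generating_tour m n p N" and "0 < n" "even m" "even n"
  shows False
proof -
  have N: "N = m * n" using tour_N[OF gt assms(2)] .
  have "even (fst (p N) + snd (p N)) \<longleftrightarrow> even N" using tour_parity[OF gt assms(2)] by simp
  moreover have "even N" using N assms(3) by simp
  moreover have "odd (fst (p N) + snd (p N))"
    using gt_parts(6)[OF gt assms(2)] assms(3,4) by auto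
  ultimately show False by simp
qed

lemma nec_m1:
  assumes gt: "generating_tour 1 n p N" and "0 < n"
  shows False
proof -
  have N: "N = n" using tour_N[OF gt assms(2)] by simp
  then have "0 < N" using assms(2) by simp
  then have "knight_adj (p 0) (p 1)" "in_strip 1 (p 0)" "in_strip 1 (p 1)"
    using gt_parts(2,3)[OF gt assms(2)] by auto
  then show False by (auto simp: knight_adj_iff in_strip_def)
qed

lemma nec_m2:
  assumes gt: "generating_tour 2 n p N" and np: "0 < n"
  shows False
proof -
  have N: "N = 2 * n" using tour_N[OF gt np] by simp
  have f: "i \<le> N \<Longrightarrow> fst (p i) = (if even i then 0 else 1)" for i
  proof (induction i)
    case 0 then show ?case using gt_parts(1)[OF gt np] by simp
  next
    case (Suc i)
    have a: "knight_adj (p i) (p (Suc i))" using gt_parts(3)[OF gt np] Suc by simp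
    have s: "in_strip 2 (p (Suc i))" using gt_parts(2)[OF gt np] Suc by simp
    have ih: "fst (p i) = (if even i then 0 else 1)" using Suc by simp
    show ?case using a s ih by (auto simp: knight_adj_iff in_strip_def)
  qed
  have "fst (p N) = 1" using gt_parts(6)[OF gt np] by auto
  then show False using f[of N] N by simp
qed

lemma outer_adj:
  assumes "knight_adj x y" "in_strip 4 y" "fst x = 0 \<or> fst x = 3"
  shows "\<not> (fst y = 0 \<or> fst y = 3)"
  using assms by (auto simp: knight_adj_iff in_strip_def)

lemma nec_m4:
  assumes gt: "generating_tour 4 n p N" and np: "0 < n" and no: "odd n"
  shows False
proof -
  have N: "N = 4 * n" using tour_N[OF gt np] by simp
  note G = gt_parts[OF gt np]
  define Ou where "Ou x \<longleftrightarrow> fst x = 0 \<or> fst x = 3" for x :: "int\<times>int"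
  define I where "I = {i. i < N \<and> Ou (p i)}"
  have nc: "\<forall>i\<in>I. Suc i \<notin> I"
  proof (intro ballI notI)
    fix i assume "i \<in> I" "Suc i \<in> I"
    then have "i < N" "Suc i < N" "Ou (p i)" "Ou (p (Suc i))" by (auto simp: I_def)
    moreover have "knight_adj (p i) (p (Suc i))" "in_strip 4 (p (Suc i))" using G(2,3) calculation by auto
    ultimately show False using outer_adj unfolding Ou_def by blast
  qed
  have last: "N - 1 \<notin> I"
  proof
    assume "N - 1 \<in> I"
    then have "N - 1 < N" "Ou (p (N-1))" by (auto simp: I_def)
    moreover have "knight_adj (p (N-1)) (p N)"
    proof -
      have "Suc (N-1) = N" using N np by simp
      then show ?thesis using G(3) \<open>N - 1 < N\<close> by metis
    qed
    moreover have "in_strip 4 (p (N-1))" using G(2) by simp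
    moreover have "Ou (p N)" using G(6) by (auto simp: Ou_def)
    ultimately show False using outer_adj knight_adj_sym unfolding Ou_def by blast
  qed
  have cardI: "card I = 2 * n"
  proof -
    let ?f = "\<lambda>i. canon 4 n (p i)"
    have inj: "inj_on ?f {..<N}"
      using G(4) same_orbit_canon[OF np] by (auto simp: inj_on_def)
    have Oc: "Ou (canon 4 n x) \<longleftrightarrow> Ou x" for x by (auto simp: Ou_def canon_def)
    have img: "?f ` I = {x \<in> rect 4 n. Ou x}"
    proof
      show "?f ` I \<subseteq> {x \<in> rect 4 n. Ou x}"
      proof
        fix x assume "x \<in> ?f ` I"
        then obtain i where "i < N" "Ou (p i)" "x = ?f i" by (auto simp: I_def)
        then show "x \<in> {x \<in> rect 4 n. Ou x}" using G(2) canon_in_rect[OF np] Oc by simp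
      qed
    next
      show "{x \<in> rect 4 n. Ou x} \<subseteq> ?f ` I"
      proof
        fix q assume q: "q \<in> {x \<in> rect 4 n. Ou x}"
        then have "in_strip 4 q" by (auto simp: rect_def in_strip_def)
        then obtain i where "i < N" "same_orbit 4 n (p i) q" using G(5) by blast
        then have "?f i = q" using same_orbit_canon[OF np] canon_rect q by simp
        then have "Ou (p i)" using q Oc[of "p i"] by simp
        then show "q \<in> ?f ` I" using \<open>i < N\<close> \<open>?f i = q\<close> I_def by blast
      qed
    qed
    have "I \<subseteq> {..<N}" by (auto simp: I_def)
    then have c1: "card I = card (?f ` I)" using card_image[OF inj_on_subset[OF inj]] by metis
    have c2: "{x \<in> rect 4 n. Ou x} = {0,3} \<times> {0..<int n}" by (auto simp: rect_def Ou_def)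
    have c3: "card ({0,3::int} \<times> {0..<int n}) = 2 * n" by (simp add: card_cartesian_product)
    show ?thesis using c1 img c2 c3 by simp
  qed
  have sub: "I \<subseteq> {0..<0 + 2 * (2*n) - 1}"
  proof
    fix i assume "i \<in> I"
    then have "i < N" "i \<noteq> N - 1" using last by (auto simp: I_def)
    then show "i \<in> {0..<0 + 2 * (2*n) - 1}" using N by simp
  qed
  have evI: "i \<in> I \<Longrightarrow> even i" for i using noncons_full[OF sub nc] cardI by simp
  have "in_strip 4 (0,1)" by (simp add: in_strip_def)
  then obtain i where i: "i < N" "same_orbit 4 n (p i) (0,1)" using G(5) by blast
  then obtain k where "(0,1) = sg 4 n k (p i)" using same_orbit_sg by blast
  then have pi: "p i = sg 4 n (-k) (0,1)" by (simp add: sg_sg)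
  have "Ou (p i)" by (simp add: pi Ou_def sg_def)
  then have "even i" using evI i by (simp add: I_def)
  then have "even (fst (p i) + snd (p i))" using tour_parity[OF gt np] i by simp
  moreover have "odd (fst (p i) + snd (p i))"
  proof (cases "even k")
    case True
    then have "even (k * int n)" by simp
    then show ?thesis using True by (simp add: pi sg_def)
  next
    case False
    then have "odd (k * int n)" using no by simp
    then show ?thesis using False by (simp add: pi sg_def)
  qed
  ultimately show False by simp
qed

lemma nec_small:
  assumes gt: "generating_tour m n p N" and np: "0 < n"
  shows "srch m n (m * n) [(0,0)] (0,0)"
  using srch_complete[OF gt np] tour_N[OF gt np] by simp

theorem theorem5p1:
  fixes m n :: nat
  assumes "0 < m" and "0 < n"
  shows "(\<exists>p N. generating_tour m n p N) \<longleftrightarrow>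
         \<not> (even m \<and> even n) \<and>
         m \<notin> {1, 2, 4} \<and>
         \<not> (m = 3 \<and> n \<in> {1, 2, 4}) \<and>
         \<not> (m = 5 \<and> n = 1)"
proof
  assume "\<exists>p N. generating_tour m n p N"
  then obtain p N where gt: "generating_tour m n p N" by blast
  have c1: "\<not> (even m \<and> even n)" using nec_even[OF gt assms(2)] by blast
  have c2: "m \<noteq> 1" using nec_m1[of n p N] gt assms(2) by blast
  have c3: "m \<noteq> 2" using nec_m2[of n p N] gt assms(2) by blast
  have c4: "m \<noteq> 4"
  proof
    assume m4: "m = 4"
    show False
    proof (cases "even n")
      case True then show False using nec_even[OF gt assms(2)] m4 by simp
    next
      case False then show False using nec_m4[of n p N] gt assms(2) m4 by simp
    qed
  qed
  have s: "srch m n (m * n) [(0,0)] (0,0)" using nec_small[OF gt assms(2)] .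
  have c5: "\<not> (m = 3 \<and> n \<in> {1, 2, 4})"
    using s srch_3_1 srch_3_2 srch_3_4 by auto
  have c6: "\<not> (m = 5 \<and> n = 1)" using s srch_5_1 by auto
  show "\<not> (even m \<and> even n) \<and> m \<notin> {1, 2, 4} \<and> \<not> (m = 3 \<and> n \<in> {1, 2, 4}) \<and> \<not> (m = 5 \<and> n = 1)"
    using c1 c2 c3 c4 c5 c6 by blast
next
  assume h: "\<not> (even m \<and> even n) \<and> m \<notin> {1, 2, 4} \<and> \<not> (m = 3 \<and> n \<in> {1, 2, 4}) \<and> \<not> (m = 5 \<and> n = 1)"
  show "\<exists>p N. generating_tour m n p N"
  proof (cases "6 \<le> m")
    case True
    show ?thesis
    proof (cases "odd n")
      case True then show ?thesis using odd_n_tour \<open>6 \<le> m\<close> by blast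
    next
      case False
      then have "odd m" using h by blast
      have "2 \<le> n" using False assms(2) by presburger
      have "Bp (int m) (int n)" using B_even_n[of "int m" "int n"] \<open>odd m\<close> \<open>6 \<le> m\<close> False \<open>2 \<le> n\<close> by simp
      then show ?thesis using tour_of_Bp \<open>odd m\<close> assms by blast
    qed
  next
    case False
    then have "m = 3 \<or> m = 5" using h assms(1) by auto
    then show ?thesis
    proof
      assume m3: "m = 3"
      then have "n = 3 \<or> 5 \<le> n" using h assms(2) by auto
      then show ?thesis
      proof
        assume "n = 3" then show ?thesis using tour_3_3 m3 by simp
      next
        assume "5 \<le> n"
        then have "Bp (int m) (int n)" using B_3[of "int n"] m3 by simp
        then show ?thesis using tour_of_Bp m3 assms by simp
      qed
    next
      assume m5: "m = 5"
      show ?thesis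
      proof (cases "even n")
        case True
        have "2 \<le> n" using True assms(2) by presburger
        have "Bp (int m) (int n)" using B_even_n[of "int m" "int n"] m5 True \<open>2 \<le> n\<close> by simp
        then show ?thesis using tour_of_Bp m5 assms by simp
      next
        case False
        have "n \<noteq> 1" using h m5 by simp
        then have "n = 3 \<or> 5 \<le> n" using False assms(2) by presburger
        then show ?thesis
        proof
          assume "n = 3" then show ?thesis using tour_5_3 m5 by simp
        next
          assume "5 \<le> n"
          then have "Bp (int m) (int n)" using B_5_odd[of "int n"] m5 False by simp
          then show ?thesis using tour_of_Bp m5 assms by simp
        qed
      qed
    qed
  qed
qed

end
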